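(* Let $F$ be a Fano manifold of Fano index $r$. Suppose that $F$ admits a weak Landau--Ginzburg model $f(x)\in\mathbb{C}[x_1^{\pm1},\dots,x_m^{\pm1}]$ all of whose coefficients are non-negative real numbers, and suppose that $\mathrm{Const}(f^{rn})\neq 0$ for all but finitely many $n\in\mathbb{Z}_{\ge0}$. Then the coefficients $G_n$ of the quantum period of $F$ are non-negative real numbers and the limit \[ \lim_{n\to\infty}\sqrt[rn]{(rn)!\,|G_{rn}|}=\lim_{n\to\infty}\sqrt[rn]{\mathrm{Const}(f^{rn})} \] exists.
   Context: For a Fano manifold $F$, the Fano index $r$ is the largest integer $r>0$ such that $c_1(F)/r$ is an integral class. The $J$-function of $F$ is the cohomology-valued (multivalued) function $J_F(t)=e^{c_1(F)\log t}\bigl(1+\sum_{i}\sum_{0\ne d\in H_2(F,\mathbb{Z})}\langle \phi_i/(1-\psi)\rangle_{0,1,d}\,\phi^i\,t^{c_1(F)\cdot d}\bigr)$, where $\{\phi_i\}$ is a basis of $H^{\mathrm{even}}(F)$, $\{\phi^i\}$ the Poincaré dual basis, and $\langle\cdot\rangle_{0,1,d}$ are genus-zero one-point descendant Gromov--Witten invariants ($\psi$ the cotangent line class). The quantum period of $F$ is $G_F(t)=\langle[\mathrm{pt}],J_F(t)\rangle=\sum_{n\ge0}G_nt^n$. For a Laurent polynomial $g$, $\mathrm{Const}(g)$ denotes its constant term. A Laurent polynomial $f$ is a weak Landau--Ginzburg model of $F$ if $G_F(t)=\sum_{n\ge0}\frac{1}{n!}\mathrm{Const}(f^n)t^n$.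 *)

theory Defs
  imports "HOL-Analysis.Analysis" "HOL-Library.Poly_Mapping"
begin

text \<open>The variables are indexed by a finite type 'm (so m = CARD('m)); a monomial
  x^a is identified with its exponent vector a :: int^'m, and a Laurent
  polynomial is a finitely supported map from exponent vectors to coefficients.
  The ring structure of poly_mapping is the usual convolution product, i.e.
  x^a * x^b = x^(a+b).\<close>

type_synonym 'm laurent_poly = "(int ^ 'm) \<Rightarrow>\<^sub>0 complex"

definition Const :: "'m::finite laurent_poly \<Rightarrow> complex" where
  "Const g = Poly_Mapping.lookup g 0"

definition nonneg_coeffs :: "'m::finite laurent_poly \<Rightarrow> bool" where
  "nonneg_coeffs g \<longleftrightarrow> (\<forall>a. \<exists>c::real. c \<ge> 0 \<and> Poly_Mapping.lookup g a = complex_of_real c)"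

text \<open>f is a weak Landau-Ginzburg model for a Fano manifold whose quantum period
  has coefficients G n: G_F(t) = sum_n (1/n!) Const(f^n) t^n, coefficientwise.\<close>

definition weak_LG_model :: "'m::finite laurent_poly \<Rightarrow> (nat \<Rightarrow> complex) \<Rightarrow> bool" where
  "weak_LG_model f G \<longleftrightarrow> (\<forall>n. G n = Const (f ^ n) / of_nat (fact n))"

end

theory Submission
  imports Defs "HOL-Real_Asymp.Real_Asymp"
begin


lemma lookup_mult_grp:
  fixes f g :: "'a::ab_group_add \<Rightarrow>\<^sub>0 'b::comm_semiring_0"
  shows "Poly_Mapping.lookup (f * g) k = (\<Sum>l\<in>Poly_Mapping.keys f. Poly_Mapping.lookup f l * Poly_Mapping.lookup g (k - l))"
proof -
  have inner: "Sum_any (\<lambda>q. (Poly_Mapping.lookup g q when k = l + q)) = Poly_Mapping.lookup g (k - l)" for l :: 'a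
  proof -
    have "(\<lambda>q::'a. (Poly_Mapping.lookup g q when k = l + q)) = (\<lambda>q. if q = k - l then Poly_Mapping.lookup g q else 0)"
      by (auto simp: when_def fun_eq_iff)
    then show ?thesis by (metis Sum_any.delta)
  qed
  have "Poly_Mapping.lookup (f * g) k = Sum_any (\<lambda>l. Poly_Mapping.lookup f l * Poly_Mapping.lookup g (k - l))"
    by (simp add: lookup_mult inner)
  also have "\<dots> = (\<Sum>l\<in>Poly_Mapping.keys f. Poly_Mapping.lookup f l * Poly_Mapping.lookup g (k - l))"
    by (rule Sum_any.expand_superset) (auto simp: in_keys_iff)
  finally show ?thesis .
qed

definition nn :: "'m::finite laurent_poly \<Rightarrow> bool" where
  "nn g \<longleftrightarrow> (\<forall>a. Im (Poly_Mapping.lookup g a) = 0 \<and> Re (Poly_Mapping.lookup g a) \<ge> 0)"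

lemma nn_iff: "nonneg_coeffs g \<longleftrightarrow> nn g"
  unfolding nonneg_coeffs_def nn_def
  by (metis Im_complex_of_real Re_complex_of_real complex_is_Real_iff of_real_Re)

lemma nn_mult:
  assumes "nn p" "nn q" shows "nn (p * q)"
  unfolding nn_def
proof
  fix a
  have "Im (Poly_Mapping.lookup (p * q) a) = (\<Sum>l\<in>Poly_Mapping.keys p. Im (Poly_Mapping.lookup p l * Poly_Mapping.lookup q (a - l)))"
    by (simp add: lookup_mult_grp Im_sum)
  also have "\<dots> = 0" using assms by (simp add: nn_def)
  finally have 1: "Im (Poly_Mapping.lookup (p * q) a) = 0" .
  have "Re (Poly_Mapping.lookup (p * q) a) = (\<Sum>l\<in>Poly_Mapping.keys p. Re (Poly_Mapping.lookup p l * Poly_Mapping.lookup q (a - l)))"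
    by (simp add: lookup_mult_grp Re_sum)
  also have "\<dots> \<ge> 0" using assms by (intro sum_nonneg) (simp add: nn_def)
  finally show "Im (Poly_Mapping.lookup (p * q) a) = 0 \<and> Re (Poly_Mapping.lookup (p * q) a) \<ge> 0"
    using 1 by simp
qed

lemma nn_one: "nn 1"
  by (simp add: nn_def lookup_one when_def)

lemma nn_power: "nn p \<Longrightarrow> nn (p ^ n)"
  by (induction n) (auto simp: nn_one nn_mult)

lemma nn_super:
  assumes "nn p" "nn q"
  shows "Re (Poly_Mapping.lookup p 0) * Re (Poly_Mapping.lookup q 0) \<le> Re (Poly_Mapping.lookup (p * q) 0)"
proof (cases "0 \<in> Poly_Mapping.keys p")
  case False
  then show ?thesis using nn_mult[OF assms] by (simp add: in_keys_iff nn_def)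
next
  case True
  have "Re (Poly_Mapping.lookup (p * q) 0) = (\<Sum>l\<in>Poly_Mapping.keys p. Re (Poly_Mapping.lookup p l * Poly_Mapping.lookup q (0 - l)))"
    by (simp add: lookup_mult_grp Re_sum)
  also have "\<dots> \<ge> Re (Poly_Mapping.lookup p 0 * Poly_Mapping.lookup q (0 - 0))"
    using assms True by (intro member_le_sum) (simp_all add: nn_def)
  finally show ?thesis using assms by (simp add: nn_def)
qed

definition S :: "'m::finite laurent_poly \<Rightarrow> real" where
  "S p = (\<Sum>l\<in>Poly_Mapping.keys p. cmod (Poly_Mapping.lookup p l))"

lemma S_nonneg: "0 \<le> S p" unfolding S_def by (simp add: sum_nonneg)

lemma mult_bound:
  assumes "\<And>a. cmod (Poly_Mapping.lookup q a) \<le> B"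
  shows "cmod (Poly_Mapping.lookup (p * q) k) \<le> S p * B"
proof -
  have "cmod (Poly_Mapping.lookup (p * q) k) \<le> (\<Sum>l\<in>Poly_Mapping.keys p. cmod (Poly_Mapping.lookup p l * Poly_Mapping.lookup q (k - l)))"
    by (simp add: lookup_mult_grp norm_sum)
  also have "\<dots> \<le> (\<Sum>l\<in>Poly_Mapping.keys p. cmod (Poly_Mapping.lookup p l) * B)"
    by (intro sum_mono) (simp add: norm_mult assms mult_left_mono)
  also have "\<dots> = S p * B" by (simp add: S_def sum_distrib_right)
  finally show ?thesis .
qed

lemma power_bound: "cmod (Poly_Mapping.lookup (p ^ n) a) \<le> S p ^ n"
proof (induction n arbitrary: a)
  case 0
  then show ?case by (simp add: lookup_one when_def)
next
  case (Suc n)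
  then show ?case by (simp add: mult_bound)
qed


lemma iter_super:
  fixes e :: "nat \<Rightarrow> real"
  assumes sup: "\<And>a b. e a * e b \<le> e (a+b)" and nn: "\<And>n. 0 \<le> e n"
  shows "e m ^ q * e t \<le> e (q * m + t)"
proof (induction q)
  case 0 then show ?case by simp
next
  case (Suc q)
  have "e m ^ Suc q * e t = e m * (e m ^ q * e t)" by simp
  also have "\<dots> \<le> e m * e (q * m + t)" using Suc nn by (intro mult_left_mono) auto
  also have "\<dots> \<le> e (m + (q * m + t))" by (rule sup)
  finally show ?case by (simp add: add.assoc)
qed

lemma q_limit:
  fixes m N :: nat assumes "m > 0"
  shows "(\<lambda>n. real ((n - N) div m) / real n) \<longlonglongrightarrow> 1 / real m"
proof (rule tendsto_sandwich)
  show "\<forall>\<^sub>F n in sequentially. ((real n - N) / m - 1) / real n \<le> real ((n - N) div m) / real n"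
    using eventually_ge_at_top[of "N+1"]
  proof eventually_elim
    case (elim n)
    have "real (n - N) = real ((n - N) div m) * m + real ((n - N) mod m)"
      by (metis of_nat_add of_nat_mult div_mult_mod_eq)
    moreover have "real ((n - N) mod m) < m" using assms by simp
    ultimately have "real (n - N) / m - 1 \<le> real ((n - N) div m)"
      using assms by (simp add: field_simps)
    moreover have "real (n - N) = real n - N" using elim by simp
    ultimately show ?case using elim by (intro divide_right_mono) auto
  qed
  show "\<forall>\<^sub>F n in sequentially. real ((n - N) div m) / real n \<le> ((real n - N) / m) / real n"
    using eventually_ge_at_top[of "N+1"]
  proof eventually_elim
    case (elim n)
    have "real (n - N) = real ((n - N) div m) * m + real ((n - N) mod m)"
      by (metis of_nat_add of_nat_mult div_mult_mod_eq)
    then have "real ((n - N) div m) \<le> real (n - N) / m"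
      using assms by (simp add: field_simps)
    moreover have "real (n - N) = real n - N" using elim by simp
    ultimately show ?case using elim by (intro divide_right_mono) auto
  qed
  have "(\<lambda>n. ((real n - N) / m - 1) / real n) \<longlonglongrightarrow> inverse (real m)"
    using assms by real_asymp
  then show "(\<lambda>n. ((real n - N) / m - 1) / real n) \<longlonglongrightarrow> 1 / real m"
    by (simp add: inverse_eq_divide)
  have "(\<lambda>n. ((real n - N) / m) / real n) \<longlonglongrightarrow> inverse (real m)"
    using assms by real_asymp
  then show "(\<lambda>n. ((real n - N) / m) / real n) \<longlonglongrightarrow> 1 / real m"
    by (simp add: inverse_eq_divide)
qed

lemma fekete_mult:
  fixes e :: "nat \<Rightarrow> real"
  assumes sup: "\<And>a b. e a * e b \<le> e (a+b)" and nn: "\<And>n. 0 \<le> e n"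
    and bd: "\<And>n. e n \<le> K ^ n" and K: "0 \<le> K"
    and pos: "\<And>n. n \<ge> N \<Longrightarrow> 0 < e n" and N1: "N \<ge> 1"
  shows "\<exists>L. (\<lambda>n. root n (e n)) \<longlonglongrightarrow> L"
proof -
  define Y where "Y = (\<lambda>m. root m (e m)) ` {N..}"
  have Yne: "Y \<noteq> {}" by (auto simp: Y_def)
  have Ybd: "y \<le> K" if yY: "y \<in> Y" for y
  proof -
    obtain m where m: "m \<ge> N" "y = root m (e m)" using yY by (auto simp: Y_def)
    have "root m (e m) \<le> root m (K ^ m)" using m N1 bd by (intro real_root_le_mono) auto
    also have "\<dots> = K" using m N1 K by (intro real_root_power_cancel) auto
    finally show ?thesis using m by simp
  qed
  have bddY: "bdd_above Y" using Ybd by (auto simp: bdd_above_def)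
  define s where "s = Sup Y"
  have upper: "root n (e n) \<le> s" if "n \<ge> N" for n
    unfolding s_def using that bddY by (intro cSup_upper) (auto simp: Y_def)
  have "(\<lambda>n. root n (e n)) \<longlonglongrightarrow> s"
  proof (rule order_tendstoI)
    fix a assume "s < a"
    then show "\<forall>\<^sub>F n in sequentially. root n (e n) < a"
      unfolding eventually_sequentially using upper \<open>s < a\<close> by (meson le_less_trans)
  next
    fix a assume "a < s"
    then obtain m where m: "m \<ge> N" "a < root m (e m)"
      using less_cSup_iff[OF Yne bddY] unfolding s_def Y_def by auto
    have m0: "m > 0" using m N1 by simp
    define E where "E = e m"
    have E: "E > 0" using pos m by (simp add: E_def)
    define A where "A = Min (e ` {N..<N+m})"
    have A: "A > 0" unfolding A_def using m0 pos by (subst Min_gr_iff) auto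
    have At: "A \<le> e t" if "N \<le> t" "t < N + m" for t
      unfolding A_def using that by (intro Min_le) auto
    define l where "l = (\<lambda>n. exp ((real ((n - N) div m) * ln E + ln A) / real n))"
    have lim: "l \<longlonglongrightarrow> exp (ln E / real m)"
    proof -
      have "(\<lambda>n. real ((n - N) div m) / real n * ln E + ln A * (1 / real n)) \<longlonglongrightarrow> 1 / real m * ln E + ln A * 0"
        by (intro tendsto_intros q_limit m0 lim_1_over_n)
      then have "(\<lambda>n. (real ((n - N) div m) * ln E + ln A) / real n) \<longlonglongrightarrow> ln E / real m"
        by (simp add: add_divide_distrib)
      then show ?thesis unfolding l_def by (rule tendsto_exp)
    qed
    have "exp (ln E / real m) = root m (e m)"
      using E m0 by (simp add: E_def root_powr_inverse powr_def)
    with lim m have "\<forall>\<^sub>F n in sequentially. a < l n" by (intro order_tendstoD) auto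
    moreover have "\<forall>\<^sub>F n in sequentially. l n \<le> root n (e n)"
      using eventually_ge_at_top[of "N + m"]
    proof eventually_elim
      case (elim n)
      define q where "q = (n - N) div m"
      define t where "t = N + (n - N) mod m"
      have nqt: "n = q * m + t" using elim unfolding q_def t_def
        by (metis add.commute add_diff_inverse_nat div_mult_mod_eq le_add1 le_trans not_le add.left_commute)
      have t: "N \<le> t" "t < N + m" using m0 by (auto simp: t_def)
      have n0: "n > 0" using elim m0 by simp
      have "E ^ q * A \<le> E ^ q * e t" using At[OF t] E by simp
      also have "\<dots> \<le> e n" using iter_super[OF sup nn, of m q t] nqt by (simp add: E_def)
      finally have le: "E ^ q * A \<le> e n" .
      have "l n = root n (E ^ q * A)"
        using E A n0 by (simp add: l_def q_def root_powr_inverse powr_def ln_mult ln_realpow)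
      also have "\<dots> \<le> root n (e n)" using le n0 by (intro real_root_le_mono) auto
      finally show ?case .
    qed
    ultimately show "\<forall>\<^sub>F n in sequentially. a < root n (e n)"
      by eventually_elim auto
  qed
  then show ?thesis by blast
qed

theorem mainTheorem1:
  fixes f :: "'m::finite laurent_poly"
    and G :: "nat \<Rightarrow> complex"
    and r :: nat
  assumes r_pos: "r > 0"
    and LG: "weak_LG_model f G"
    and nonneg: "nonneg_coeffs f"
    and nonzero: "finite {n::nat. Const (f ^ (r * n)) = 0}"
  shows "(\<forall>n. G n \<in> \<real> \<and> Re (G n) \<ge> 0) \<and>
         (\<exists>L::real.
            (\<lambda>n. root (r * n) (fact (r * n) * cmod (G (r * n)))) \<longlonglongrightarrow> L \<and>
            (\<lambda>n. root (r * n) (Re (Const (f ^ (r * n))))) \<longlonglongrightarrow> L)"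
proof -
  have nnf: "nn f" using nonneg nn_iff by blast
  define c where "c n = Re (Const (f ^ n))" for n
  have cC: "Const (f ^ n) = complex_of_real (c n)" for n
    using nn_power[OF nnf, of n] unfolding c_def Const_def nn_def
    by (simp add: complex_eq_iff)
  have c0: "c n \<ge> 0" for n
    using nn_power[OF nnf, of n] unfolding c_def Const_def nn_def by simp
  have Gc: "G n = complex_of_real (c n / fact n)" for n
    using LG unfolding weak_LG_model_def by (simp add: cC)
  have part1: "\<forall>n. G n \<in> \<real> \<and> Re (G n) \<ge> 0"
  proof
    fix n
    have "c n / fact n \<ge> 0" using c0 by simp
    then show "G n \<in> \<real> \<and> Re (G n) \<ge> 0"
      unfolding Gc by (simp only: Reals_of_real Re_complex_of_real simp_thms)
  qed
  have fG: "fact n * cmod (G n) = c n" for n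
  proof -
    have "cmod (G n) = c n / fact n" unfolding Gc norm_of_real using c0[of n] by simp
    then show ?thesis by simp
  qed
  define e where "e n = c (r * n)" for n
  have sup: "e a * e b \<le> e (a + b)" for a b
    using nn_super[OF nn_power[OF nnf, of "r*a"] nn_power[OF nnf, of "r*b"]]
    by (simp add: e_def c_def Const_def distrib_left power_add)
  have nne: "0 \<le> e n" for n by (simp add: e_def c0)
  have bd: "e n \<le> (S f ^ r) ^ n" for n
  proof -
    have "e n \<le> cmod (Const (f ^ (r * n)))" by (simp add: e_def cC c0)
    also have "\<dots> \<le> S f ^ (r * n)" unfolding Const_def by (rule power_bound)
    finally show ?thesis by (simp add: power_mult)
  qed
  obtain M where M: "\<And>n. n \<in> {n::nat. Const (f ^ (r * n)) = 0} \<Longrightarrow> n \<le> M"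
    using nonzero finite_nat_set_iff_bounded_le by meson
  have pos: "0 < e n" if "n \<ge> M + 1" for n
  proof -
    have "Const (f ^ (r * n)) \<noteq> 0" using M[of n] that by auto
    then have "c (r * n) \<noteq> 0" by (simp add: cC)
    then show ?thesis using c0[of "r*n"] by (simp add: e_def)
  qed
  obtain L where L: "(\<lambda>n. root n (e n)) \<longlonglongrightarrow> L"
    using fekete_mult[OF sup nne bd _ pos, of "M+1"] S_nonneg[of f] by auto
  have "(\<lambda>n. root r (root n (e n))) \<longlonglongrightarrow> root r L"
    by (intro tendsto_intros L)
  then have lim: "(\<lambda>n. root (r * n) (c (r * n))) \<longlonglongrightarrow> root r L"
    by (simp add: real_root_mult_exp e_def)
  show ?thesis
    using part1 lim by (simp add: fG c_def[symmetric]) blast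
qed

end
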